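(* Let $\Gamma=\langle x,y,z\mid x^2=y^2=z^2=e,\ xy^{-1}=yx^{-1},\ xz^{-1}=zx^{-1},\ yz^{-1}=zy^{-1}\rangle$ (so that $\Gamma\cong(\mathbb{Z}/2)^3$ and $C_\Delta(\Gamma)$ is the hypercube of dimension 3), with $\Delta=\{x,y,z\}$. There is no homogeneous scalar quantum walk on $C_\Delta(\Gamma)$.
   Context: The Cayley graph $C_\Delta(\Gamma)$ has vertex set $\Gamma$ and directed edges $(g,g\delta)$, $g\in\Gamma,\delta\in\Delta$. Let $\ell^2(\Gamma)$ have orthonormal basis $\{|g\rangle\}_{g\in\Gamma}$ and for $\delta\in\Gamma$ let $U_\delta|g\rangle=|g\delta\rangle$. A homogeneous scalar quantum walk on $C_\Delta(\Gamma)$ is a unitary operator $W=\sum_{\delta\in\Delta}W_\delta U_\delta$ with all complex coefficients $W_\delta$ nonzero. *)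

theory Defs
  imports Complex_Main
begin

text \<open>The group Gamma = (Z/2)^3, realised on bool x bool x bool with componentwise
  exclusive or as the group operation; identity (False,False,False).\<close>

type_synonym cube = "bool \<times> bool \<times> bool"

definition cmul :: "cube \<Rightarrow> cube \<Rightarrow> cube" where
  "cmul g h = (fst g \<noteq> fst h, fst (snd g) \<noteq> fst (snd h), snd (snd g) \<noteq> snd (snd h))"

definition cinv :: "cube \<Rightarrow> cube" where
  "cinv g = g"

definition gx :: cube where "gx = (True, False, False)"
definition gy :: cube where "gy = (False, True, False)"
definition gz :: cube where "gz = (False, False, True)"

text \<open>Vectors of l2(Gamma) are functions Gamma \<Rightarrow> complex (Gamma is finite).
  U_delta |g> = |g delta>, hence (U_delta f)(h) = f(h delta^-1).\<close>

definition shiftU :: "cube \<Rightarrow> (cube \<Rightarrow> complex) \<Rightarrow> (cube \<Rightarrow> complex)" where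
  "shiftU \<delta> f = (\<lambda>h. f (cmul h (cinv \<delta>)))"

definition l2inner :: "(cube \<Rightarrow> complex) \<Rightarrow> (cube \<Rightarrow> complex) \<Rightarrow> complex" where
  "l2inner f g = (\<Sum>h\<in>UNIV. cnj (f h) * g h)"

definition walk_op :: "cube set \<Rightarrow> (cube \<Rightarrow> complex) \<Rightarrow> (cube \<Rightarrow> complex) \<Rightarrow> (cube \<Rightarrow> complex)" where
  "walk_op \<Delta> W f = (\<lambda>h. \<Sum>\<delta>\<in>\<Delta>. W \<delta> * shiftU \<delta> f h)"

definition unitary_op :: "((cube \<Rightarrow> complex) \<Rightarrow> (cube \<Rightarrow> complex)) \<Rightarrow> bool" where
  "unitary_op T \<longleftrightarrow> (\<forall>f g. l2inner (T f) (T g) = l2inner f g) \<and> surj T"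

definition homogeneous_scalar_qw :: "cube set \<Rightarrow> (cube \<Rightarrow> complex) \<Rightarrow> bool" where
  "homogeneous_scalar_qw \<Delta> W \<longleftrightarrow> (\<forall>\<delta>\<in>\<Delta>. W \<delta> \<noteq> 0) \<and> unitary_op (walk_op \<Delta> W)"

end

theory Submission
  imports Defs
begin

lemma sum_cube: "(\<Sum>h\<in>(UNIV::cube set). f h) =
  f (False,False,False) + f (False,False,True) + f (False,True,False) + f (False,True,True) +
  f (True,False,False) + f (True,False,True) + f (True,True,False) + f (True,True,True)"
proof -
  have "(UNIV::cube set) = UNIV \<times> (UNIV \<times> UNIV)" by simp
  then have "(\<Sum>h\<in>(UNIV::cube set). f h) = (\<Sum>a\<in>UNIV. \<Sum>p\<in>UNIV \<times> UNIV. f (a,p))"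
    by (simp add: sum.cartesian_product)
  also have "\<dots> = (\<Sum>a\<in>UNIV. \<Sum>b\<in>UNIV. \<Sum>c\<in>UNIV. f (a,b,c))"
    by (simp add: sum.cartesian_product)
  finally show ?thesis by (simp add: UNIV_bool algebra_simps)
qed

lemma walk_eval: "walk_op {(True,False,False),(False,True,False),(False,False,True)} W f h =
   W (True,False,False) * f (cmul h (True,False,False)) + W (False,True,False) * f (cmul h (False,True,False))
   + W (False,False,True) * f (cmul h (False,False,True))"
  by (simp add: walk_op_def shiftU_def cinv_def gx_def gy_def gz_def)

definition dlt :: "cube \<Rightarrow> cube \<Rightarrow> complex" where
  "dlt g h = (if h = g then 1 else 0)"

lemma key:
  assumes "unitary_op (walk_op {gx,gy,gz} W)" and "g \<noteq> k"
  shows "l2inner (walk_op {gx,gy,gz} W (dlt g)) (walk_op {gx,gy,gz} W (dlt k)) = 0"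
proof -
  have "l2inner (dlt g) (dlt k) = 0"
    using assms(2) by (cases g; cases k) (auto simp add: l2inner_def dlt_def sum_cube)
  thus ?thesis using assms(1) unfolding unitary_op_def by simp
qed

lemma orth3:
  fixes p q r s t u :: real
  assumes "p*r+q*s = 0" "p*t+q*u = 0" "r*t+s*u = 0"
    "p^2+q^2 \<noteq> 0" "r^2+s^2 \<noteq> 0" "t^2+u^2 \<noteq> 0"
  shows False
proof -
  have i1: "(p*r+q*s)^2 + (p*s-q*r)^2 = (p^2+q^2)*(r^2+s^2)" by algebra
  have i2: "(p*t+q*u)^2 + (p*u-q*t)^2 = (p^2+q^2)*(t^2+u^2)" by algebra
  have i3: "(p*s-q*r)*(p*u-q*t) = (p^2+q^2)*(r*t+s*u) - (p*r+q*s)*(p*t+q*u)" by algebra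
  have "p*s-q*r \<noteq> 0" using i1 assms by auto
  moreover have "p*u-q*t \<noteq> 0" using i2 assms by auto
  ultimately show False using i3 assms by simp
qed

theorem mainTheorem7:
  shows "\<not> (\<exists>W. homogeneous_scalar_qw {gx, gy, gz} W)"
proof
  assume "\<exists>W. homogeneous_scalar_qw {gx, gy, gz} W"
  then obtain W where nz: "\<forall>\<delta>\<in>{gx,gy,gz}. W \<delta> \<noteq> 0" and U: "unitary_op (walk_op {gx,gy,gz} W)"
    unfolding homogeneous_scalar_qw_def by blast
  define a where "a = W gx"
  define b where "b = W gy"
  define c where "c = W gz"
  have e1: "cnj a * b + cnj b * a = 0"
    using key[OF U, of "(False,False,False)" "(True,True,False)"]
    by (simp add: l2inner_def sum_cube walk_eval dlt_def cmul_def gx_def gy_def gz_def a_def b_def add.commute)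
  have e2: "cnj a * c + cnj c * a = 0"
    using key[OF U, of "(False,False,False)" "(True,False,True)"]
    by (simp add: l2inner_def sum_cube walk_eval dlt_def cmul_def gx_def gy_def gz_def a_def c_def add.commute)
  have e3: "cnj b * c + cnj c * b = 0"
    using key[OF U, of "(False,False,False)" "(False,True,True)"]
    by (simp add: l2inner_def sum_cube walk_eval dlt_def cmul_def gx_def gy_def gz_def b_def c_def add.commute)
  have r1: "Re a * Re b + Im a * Im b = 0" using arg_cong[OF e1, of Re] by simp
  have r2: "Re a * Re c + Im a * Im c = 0" using arg_cong[OF e2, of Re] by simp
  have r3: "Re b * Re c + Im b * Im c = 0" using arg_cong[OF e3, of Re] by simp
  have na: "(Re a)^2 + (Im a)^2 \<noteq> 0" using nz a_def complex_eq_iff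
    by (metis insert_iff sum_power2_eq_zero_iff zero_complex.sel)
  have nb: "(Re b)^2 + (Im b)^2 \<noteq> 0" using nz b_def complex_eq_iff
    by (metis insert_iff sum_power2_eq_zero_iff zero_complex.sel)
  have nc: "(Re c)^2 + (Im c)^2 \<noteq> 0" using nz c_def complex_eq_iff
    by (metis insert_iff sum_power2_eq_zero_iff zero_complex.sel)
  show False using orth3[OF r1 r2 r3 na nb nc] .
qed

end
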